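(* For all integers $n\ge 4$ and $2\le k\le n/2$, there exists a feasible simple homogeneous PV graph $\vec G_R$ with $n$ sites and $k$ carriers such that $$\mathcal M(\vec G_R)\ >\ \tfrac18\,k\,n\,(n-8).$$ (This holds even though the agent knows $\vec G_R$ and $k$ and has unlimited memory.)
   Context: A PV (periodically varying) system consists of a finite set $S$ of $n$ sites and a set $C$ of $k\le n$ carriers. Each carrier $c$ has a route $\pi(c)=\langle x_0,\dots,x_{p(c)-1}\rangle$, a finite sequence of sites of length $p(c)\ge1$ called its period; $\pi(c)[j]=x_{j\bmod p(c)}$. At each time $t\in\mathbb N$ carrier $c$ is at $\pi(c)[t]$ and moves to $\pi(c)[t+1]$. The PV graph $\vec G_R$ is the directed edge-labelled multigraph on $S$ with edges $(x_i,x_{i+1},i)$, $0\le i<p(c)$, for every carrier. The system is homogeneous if all $p(c)$ are equal, heterogeneous otherwise. A route is simple if $\pi(c)[i]\ne\pi(c)[i+1]$ for all $i$ and, whenever $\pi(c)[i]=\pi(c)[j]$ with $0\le i<j<p(c)$, then $\pi(c)[i+1]\ne\pi(c)[j+1]$ (no self-loops and no repeated directed edge within one period); a PV graph is simple if all its routes are simple. An exploring agent is injected at time $0$ at a site of $\mathrm{start}(\vec G_R)=\{\pi(c)[0]:c\in C\}$; if at time $t$ it is at site $x$ it must either ride one step with some carrier $c$ with $\pi(c)[t]=x$ (one move) or halt; it cannot wait. A strategy solves PVG-Exploration of $\vec G_R$ if from every injection site the agent visits all sites and halts in finite time. $\vec G_R$ is feasible if from the starting point of every carrier some realizable walk visits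 all sites. For feasible $\vec G_R$, $\mathcal M(\vec G_R)$ denotes the minimum, over all deterministic strategies solving PVG-Exploration of $\vec G_R$ (which may use full knowledge of $\vec G_R$ and unlimited memory), of the maximum over injection sites of the number of moves performed. *)

theory Defs
  imports Complex_Main
begin

text \<open>A PV system with sites {0..<n} and carriers {0..<k}; R c is the route
  (list of sites, its length is the period p(c)) of carrier c.\<close>

type_synonym routes = "nat \<Rightarrow> nat list"

definition pos :: "routes \<Rightarrow> nat \<Rightarrow> nat \<Rightarrow> nat" where
  "pos R c t = R c ! (t mod length (R c))"

definition pv_system :: "nat \<Rightarrow> nat \<Rightarrow> routes \<Rightarrow> bool" where
  "pv_system n k R \<longleftrightarrow> 1 \<le> k \<and> k \<le> n \<and>
     (\<forall>c<k. R c \<noteq> [] \<and> set (R c) \<subseteq> {0..<n})"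

definition homogeneous :: "nat \<Rightarrow> routes \<Rightarrow> bool" where
  "homogeneous k R \<longleftrightarrow> (\<forall>c<k. \<forall>d<k. length (R c) = length (R d))"

definition simple_route :: "nat list \<Rightarrow> bool" where
  "simple_route r \<longleftrightarrow> (let p = length r in
     (\<forall>i<p. r ! i \<noteq> r ! ((i+1) mod p)) \<and>
     (\<forall>i j. i < j \<and> j < p \<and> r ! i = r ! j \<longrightarrow> r ! ((i+1) mod p) \<noteq> r ! ((j+1) mod p)))"

definition simple_pv :: "nat \<Rightarrow> routes \<Rightarrow> bool" where
  "simple_pv k R \<longleftrightarrow> (\<forall>c<k. simple_route (R c))"

definition start_sites :: "nat \<Rightarrow> routes \<Rightarrow> nat set" where
  "start_sites k R = {pos R c 0 | c. c < k}"

text \<open>A realizable walk from x: a list of carriers ridden at times 0,1,2,...\<close>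
definition walk :: "nat \<Rightarrow> routes \<Rightarrow> nat \<Rightarrow> nat list \<Rightarrow> bool" where
  "walk k R x cs \<longleftrightarrow> (\<forall>i<length cs. cs ! i < k \<and>
      pos R (cs ! i) i = (if i = 0 then x else pos R (cs ! (i - 1)) i))"

definition walk_sites :: "routes \<Rightarrow> nat \<Rightarrow> nat list \<Rightarrow> nat set" where
  "walk_sites R x cs = insert x {pos R (cs ! i) (i + 1) | i. i < length cs}"

definition feasible :: "nat \<Rightarrow> nat \<Rightarrow> routes \<Rightarrow> bool" where
  "feasible n k R \<longleftrightarrow> (\<forall>x\<in>start_sites k R. \<exists>cs. walk k R x cs \<and> {0..<n} \<subseteq> walk_sites R x cs)"

text \<open>A deterministic strategy maps the history (sites visited so far, starting
  with the injection site; the current time is its length minus one) to a decision: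
  None = halt, Some c = ride carrier c for one step.  It may depend arbitrarily on
  R, k, n (full knowledge, unlimited memory).\<close>
type_synonym strategy = "nat list \<Rightarrow> nat option"

fun run :: "strategy \<Rightarrow> routes \<Rightarrow> nat \<Rightarrow> nat \<Rightarrow> nat list" where
  "run s R x 0 = [x]"
| "run s R x (Suc t) = (let h = run s R x t in
     case s h of None \<Rightarrow> h | Some c \<Rightarrow> h @ [pos R c (length h)])"

definition solves :: "nat \<Rightarrow> nat \<Rightarrow> routes \<Rightarrow> strategy \<Rightarrow> bool" where
  "solves n k R s \<longleftrightarrow> (\<forall>x\<in>start_sites k R.
      (\<forall>t. case s (run s R x t) of None \<Rightarrow> True
            | Some c \<Rightarrow> c < k \<and> pos R c (length (run s R x t) - 1) = last (run s R x t)) \<and>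
      (\<exists>T. s (run s R x T) = None \<and> {0..<n} \<subseteq> set (run s R x T)))"

definition moves :: "strategy \<Rightarrow> routes \<Rightarrow> nat \<Rightarrow> nat" where
  "moves s R x = (LEAST m. s (run s R x m) = None)"

definition M :: "nat \<Rightarrow> nat \<Rightarrow> routes \<Rightarrow> nat" where
  "M n k R = (LEAST m. \<exists>s. solves n k R s \<and> (\<forall>x\<in>start_sites k R. moves s R x \<le> m))"

end

theory Submission
  imports Defs
begin


definition hh :: "nat \<Rightarrow> nat" where "hh n = (n - 2) div 2"
definition bb :: "nat \<Rightarrow> nat \<Rightarrow> nat" where
 "bb h i = (if even i then i div (2*h) else h + (i mod (2*h)) div 2)"

lemma bb_even_lt: "even i \<Longrightarrow> i < 2*h*h \<Longrightarrow> bb h i < h"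
  by (simp add: bb_def less_mult_imp_div_less mult.commute)

lemma odd_mod2h: "odd (i::nat) \<Longrightarrow> h > 0 \<Longrightarrow> odd (i mod (2*h))"
  by (metis dvd_mod_iff dvd_triv_left)

lemma bb_odd: "odd i \<Longrightarrow> h > 0 \<Longrightarrow> h \<le> bb h i \<and> bb h i < 2*h"
proof -
  assume "odd i" "h > 0"
  have "i mod (2*h) < 2*h" using \<open>h>0\<close> by simp
  then have "(i mod (2*h)) div 2 < h" by linarith
  then show ?thesis using \<open>odd i\<close> by (simp add: bb_def)
qed

lemma bb_lt: "i < 2*h*h \<Longrightarrow> h > 0 \<Longrightarrow> bb h i < 2*h"
proof (cases "even i")
  case True
  assume "i < 2*h*h" "h > 0"
  then show ?thesis using bb_even_lt[OF True] by fastforce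
next
  case False
  assume "h > 0"
  then show ?thesis using bb_odd[OF False] by simp
qed

lemma bb_odd_inj: "odd i \<Longrightarrow> odd j \<Longrightarrow> h > 0 \<Longrightarrow> bb h i = bb h j \<Longrightarrow> i mod (2*h) = j mod (2*h)"
proof -
  assume a: "odd i" "odd j" "h > 0" "bb h i = bb h j"
  then have e: "(i mod (2*h)) div 2 = (j mod (2*h)) div 2" by (simp add: bb_def)
  have "odd (i mod (2*h))" "odd (j mod (2*h))" using a odd_mod2h by auto
  then show ?thesis using e by (metis odd_two_times_div_two_succ)
qed

lemma mod_plus2: "m > 2 \<Longrightarrow> (d::nat) mod m \<noteq> (d+2) mod m"
proof
  assume m: "m > 2" and e: "d mod m = (d+2) mod m"
  have "(d+2) mod m = (d mod m + 2) mod m" by (rule mod_add_left_eq[symmetric])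
  hence "(d mod m + 2) mod m = d mod m" using e by simp
  moreover have "d mod m < m" using m by simp
  ultimately show False using m
  proof (cases "d mod m + 2 < m")
    case False
    then have "(d mod m + 2) mod m = (d mod m + 2 - m) mod m" by (simp add: le_mod_geq)
    also have "\<dots> = d mod m + 2 - m" using \<open>d mod m < m\<close> m by (intro mod_less) linarith
    finally show False using \<open>(d mod m + 2) mod m = d mod m\<close> m False by linarith
  qed simp
qed

lemma nx_inj: "i < p \<Longrightarrow> j < (p::nat) \<Longrightarrow> (i+1) mod p = (j+1) mod p \<Longrightarrow> i = j"
  by (metis Suc_eq_plus1 Suc_lessI add_right_cancel mod_less mod_self nat.distinct(1) zero_less_Suc)

lemma divmod_eq: "(x::nat) div m = y div m \<Longrightarrow> x mod m = y mod m \<Longrightarrow> x = y"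
  by (metis div_mult_mod_eq)

lemma bb_par: "h > 0 \<Longrightarrow> i < 2*h*h \<Longrightarrow> j < 2*h*h \<Longrightarrow> bb h i = bb h j \<Longrightarrow> even i = even j"
  using bb_even_lt bb_odd by (metis not_le)

lemma bb_edge_inj:
  assumes h: "h > 0" and ij: "i < j" "j < 2*h*h"
    and e1: "bb h i = bb h j" and e2: "bb h ((i+1) mod (2*h*h)) = bb h ((j+1) mod (2*h*h))"
  shows False
proof -
  let ?p = "2*h*h"
  have pe: "even ?p" by simp
  have dv: "2*h dvd ?p" by simp
  have par: "even i = even j" using bb_par[OF h _ _ e1] ij by simp
  show False
  proof (cases "even i")
    case True
    then have ej: "even j" using par by simp
    have i1: "i+1 < ?p" using True ij pe by (metis Suc_eq_plus1 Suc_lessI dvd_imp_le even_Suc_div_two le_less_trans odd_one order.strict_trans)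
    have j1: "j+1 < ?p" using ej ij pe by (metis Suc_eq_plus1 Suc_lessI even_Suc)
    have "bb h (i+1) = bb h (j+1)" using e2 i1 j1 by simp
    then have "(i+1) mod (2*h) = (j+1) mod (2*h)" using bb_odd_inj h True ej by simp
    moreover have "(x+1) mod (2*h) = x mod (2*h) + 1" if "even x" for x
    proof -
      have "even (x mod (2*h))" using that by (metis dvd_mod_iff dvd_triv_left)
      then have "Suc (x mod (2*h)) \<noteq> 2*h" by (metis even_Suc dvd_triv_left)
      then show ?thesis using mod_Suc[of x "2*h"] by simp
    qed
    ultimately have m: "i mod (2*h) = j mod (2*h)" using True ej by simp
    have "i div (2*h) = j div (2*h)" using e1 True ej by (simp add: bb_def)
    from divmod_eq[OF this m] have "i = j" .
    then show False using ij by simp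
  next
    case False
    then have oj: "odd j" using par by simp
    have m: "i mod (2*h) = j mod (2*h)" using bb_odd_inj[OF False oj h e1] .
    then have m1: "(i+1) mod (2*h) = (j+1) mod (2*h)" by (metis mod_add_left_eq)
    have en: "even ((x+1) mod ?p)" if "odd x" for x using that pe by (simp add: dvd_mod_iff) 
    have "((i+1) mod ?p) div (2*h) = ((j+1) mod ?p) div (2*h)"
      using e2 en[OF False] en[OF oj] by (simp add: bb_def)
    moreover have "((i+1) mod ?p) mod (2*h) = ((j+1) mod ?p) mod (2*h)"
      using m1 dv by (simp add: mod_mod_cancel)
    ultimately have "(i+1) mod ?p = (j+1) mod ?p" by (rule divmod_eq)
    then have "i = j" using nx_inj ij by (meson order.strict_trans)
    then show False using ij by simp
  qed
qed



lemma mod2: "(y::nat) < 2*m \<Longrightarrow> y mod m = (if y < m then y else y - m)"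
  by (simp add: le_mod_geq)
lemma mod_transl_inj: "(x + c) mod m = (x + d) mod (m::nat) \<Longrightarrow> c < m \<Longrightarrow> d < m \<Longrightarrow> c = d"
proof -
  assume e: "(x + c) mod m = (x + d) mod m" and cd: "c < m" "d < m"
  let ?a = "x mod m"
  have a: "?a < m" using cd by simp
  have "(?a + c) mod m = (?a + d) mod m" using e by (metis mod_add_left_eq)
  then show "c = d" using mod2[of "?a + c" m] mod2[of "?a + d" m] a cd
    by (auto split: if_splits)
qed

definition pp :: "nat \<Rightarrow> nat" where "pp n = 2 * hh n * hh n"

definition rr :: "nat \<Rightarrow> nat \<Rightarrow> nat \<Rightarrow> nat \<Rightarrow> nat" where
 "rr n k c i = (if c = k-1 \<and> i = 0 then 2*hh n+1
   else if c = k-1 \<and> i = 2 then n-1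
   else if c < k-1 \<and> i = pp n - 2 - 2*c then 2*hh n
   else if 1 \<le> c \<and> i = pp n - 2*c then 2*hh n
   else (bb (hh n) i + c) mod (2*hh n))"

definition dv :: "nat \<Rightarrow> nat \<Rightarrow> nat \<Rightarrow> nat \<Rightarrow> bool" where
 "dv n k c i \<longleftrightarrow> (c = k-1 \<and> (i = 0 \<or> i = 2)) \<or> (c < k-1 \<and> i = pp n - 2 - 2*c) \<or> (1 \<le> c \<and> i = pp n - 2*c)"

definition RR :: "nat \<Rightarrow> nat \<Rightarrow> routes" where
 "RR n k c = map (rr n k c) [0..<pp n]"

locale L = fixes n k :: nat
  assumes n8: "8 \<le> n" and k2: "2 \<le> k" and kn: "2*k \<le> n"
begin

abbreviation "h \<equiv> hh n"
abbreviation "p \<equiv> pp n"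

lemma h3: "3 \<le> h" using n8 by (simp add: hh_def)
lemma kh: "k \<le> h + 1" using kn by (simp add: hh_def)
lemma nh: "n - 1 = 2*h+1 \<or> n - 1 = 2*h+2" using n8 by (simp add: hh_def) presburger
lemma pk: "2*k + 10 \<le> p"
proof -
  have "3*h \<le> h*h" using h3 by simp
  then have "2*k + 10 \<le> 2*(h*h)" using kh h3 by linarith
  then show ?thesis by (simp add: pp_def mult.assoc)
qed
lemma p_even: "even p" by (simp add: pp_def)
lemma p_pos: "0 < p" using pk by simp
lemma hp: "h > 0" using h3 by simp

lemma rr_ndv: "\<not> dv n k c i \<Longrightarrow> rr n k c i = (bb h i + c) mod (2*h)"
  by (auto simp: rr_def dv_def)

lemma rr_ndv_lt: "\<not> dv n k c i \<Longrightarrow> rr n k c i < 2*h"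
  using rr_ndv hp by simp

lemma rr_cases: "rr n k c i = 2*h+1 \<or> rr n k c i = n-1 \<or> rr n k c i = 2*h \<or> rr n k c i = (bb h i + c) mod (2*h)"
  unfolding rr_def by (simp split: if_split)

lemma rr_dv: "dv n k c i \<Longrightarrow> 2*h \<le> rr n k c i \<and> rr n k c i < n"
proof -
  assume d: "dv n k c i"
  have "rr n k c i \<noteq> (bb h i + c) mod (2*h) \<or> rr n k c i \<in> {2*h, 2*h+1, n-1}"
    using d unfolding rr_def dv_def by (auto split: if_split)
  then have "rr n k c i \<in> {2*h, 2*h+1, n-1}" using rr_cases by blast
  then show ?thesis using nh n8 by auto
qed

lemma rr_lt: "rr n k c i < n"
  using rr_dv rr_ndv_lt nh by (cases "dv n k c i") force+

lemma dv_even: "c < k \<Longrightarrow> dv n k c i \<Longrightarrow> even i \<and> i + 2 \<le> p"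
  using p_even pk unfolding dv_def by auto

lemma dv_val: assumes c: "c < k" and d: "dv n k c i"
  shows "(c = k-1 \<and> i = 0 \<and> rr n k c i = 2*h+1) \<or> (c = k-1 \<and> i = 2 \<and> rr n k c i = n-1) \<or>
         (c < k-1 \<and> i = p-2-2*c \<and> rr n k c i = 2*h) \<or> (1 \<le> c \<and> i = p-2*c \<and> rr n k c i = 2*h)"
proof -
  have big: "p - 2 - 2*c \<ge> 10" "p - 2*c \<ge> 10" using pk c by arith+
  show ?thesis
  proof (cases "c = k-1")
    case True
    then have "\<not> c < k-1" by simp
    then have "(i = 0 \<or> i = 2) \<or> (1 \<le> c \<and> i = p-2*c)" using d True unfolding dv_def by simp
    then show ?thesis
    proof (elim disjE)
      assume "i = 0" then show ?thesis using True by (simp add: rr_def)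
    next
      assume "i = 2" then show ?thesis using True by (simp add: rr_def)
    next
      assume a: "1 \<le> c \<and> i = p-2*c"
      then have "i \<noteq> 0" "i \<noteq> 2" using big by linarith+
      then show ?thesis using a True \<open>\<not> c < k-1\<close> by (simp add: rr_def)
    qed
  next
    case False
    then have ck: "c < k-1" using c by simp
    then have "i = p-2-2*c \<or> (1 \<le> c \<and> i = p-2*c)" using d False unfolding dv_def by simp
    then show ?thesis
    proof (elim disjE)
      assume "i = p-2-2*c" then show ?thesis using False ck by (simp add: rr_def)
    next
      assume a: "1 \<le> c \<and> i = p-2*c"
      then have "i \<noteq> p-2-2*c" using big by linarith
      then show ?thesis using a False by (simp add: rr_def)
    qed
  qed
qed

lemma pc: "c < k \<Longrightarrow> p - 2*c = p-2-2*c + 2 \<and> p-2-2*c \<ge> 10 \<and> p-2-2*c + 2*c + 2 = p"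
  using pk by arith

lemma dv_pair: "c < k \<Longrightarrow> dv n k c i \<Longrightarrow> dv n k c j \<Longrightarrow> i < j \<Longrightarrow> rr n k c i = rr n k c j \<Longrightarrow> j = i + 2"
  using dv_val[of c i] dv_val[of c j] nh pc[of c] by auto

lemma meet_arith: "A + 2*c + 2 = P \<Longrightarrow> B + 2*d + 2 = (P::nat) \<Longrightarrow> A \<ge> 10 \<Longrightarrow> B \<ge> 10 \<Longrightarrow> (i = A \<or> i = A+2) \<Longrightarrow>
  (i = 0 \<or> i = 2 \<or> i = B \<or> i = B+2) \<Longrightarrow> c < d \<Longrightarrow> d = c+1 \<and> i = A"
  by auto

lemma meet: "c < k \<Longrightarrow> d < k \<Longrightarrow> c \<noteq> d \<Longrightarrow> rr n k c i = rr n k d i \<Longrightarrow>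
   (d = c+1 \<and> i = p-2-2*c) \<or> (c = d+1 \<and> i = p-2-2*d)"
proof -
  assume a: "c < k" "d < k" "c \<noteq> d" "rr n k c i = rr n k d i"
  show ?thesis
  proof (cases "dv n k c i \<or> dv n k d i")
    case False
    then have "(bb h i + c) mod (2*h) = (bb h i + d) mod (2*h)" using a rr_ndv by simp
    moreover have "c < 2*h" "d < 2*h" using a kh h3 by linarith+
    ultimately show ?thesis using mod_transl_inj a by blast
  next
    case True
    then have "dv n k c i \<and> dv n k d i" using a rr_dv rr_ndv_lt by (metis not_le)
    then have "c < d \<or> d < c" using a by auto
    then show ?thesis
    proof
      assume cd: "c < d"
      then have "c \<noteq> k-1" using a by simp
      then have ci: "i = p-2-2*c \<or> i = p-2*c \<and> 1 \<le> c" "rr n k c i = 2*h" using dv_val[of c i] a \<open>dv n k c i \<and> dv n k d i\<close> by auto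
      have di: "i = 0 \<or> i = 2 \<or> i = p-2-2*d \<or> i = p-2*d" using dv_val[of d i] a \<open>dv n k c i \<and> dv n k d i\<close> by auto
      have "d = c+1 \<and> i = p-2-2*c"
        apply (rule meet_arith[of "p-2-2*c" c p "p-2-2*d" d i])
        using ci(1) di pc[of c] pc[of d] a cd by auto
      then show ?thesis by simp
    next
      assume cd: "d < c"
      then have "d \<noteq> k-1" using a by simp
      then have di: "i = p-2-2*d \<or> i = p-2*d \<and> 1 \<le> d" "rr n k d i = 2*h" using dv_val[of d i] a \<open>dv n k c i \<and> dv n k d i\<close> by auto
      have ci: "i = 0 \<or> i = 2 \<or> i = p-2-2*c \<or> i = p-2*c" using dv_val[of c i] a \<open>dv n k c i \<and> dv n k d i\<close> by auto
      have "c = d+1 \<and> i = p-2-2*d"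
        apply (rule meet_arith[of "p-2-2*d" d p "p-2-2*c" c i])
        using di(1) ci pc[of c] pc[of d] a cd by auto
      then show ?thesis by simp
    qed
  qed
qed

end


context L begin

lemma p_def': "p = 2*h*h" by (simp add: pp_def)

lemma rr_nd_inj: "\<not> dv n k c i \<Longrightarrow> \<not> dv n k c j \<Longrightarrow> i < p \<Longrightarrow> j < p \<Longrightarrow> rr n k c i = rr n k c j \<Longrightarrow> bb h i = bb h j"
proof -
  assume a: "\<not> dv n k c i" "\<not> dv n k c j" "i < p" "j < p" "rr n k c i = rr n k c j"
  have "bb h i < 2*h" "bb h j < 2*h" using bb_lt hp a(3,4) p_def' by auto
  moreover have "(c + bb h i) mod (2*h) = (c + bb h j) mod (2*h)" using a rr_ndv by (simp add: add.commute)
  ultimately show ?thesis using mod_transl_inj by blast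
qed

lemma nx_par: "i < p \<Longrightarrow> even ((i+1) mod p) \<longleftrightarrow> odd i"
proof (cases "i + 1 < p")
  case True then show ?thesis by simp
next
  case False
  assume "i < p"
  then have "i + 1 = p" using False by simp
  then show ?thesis using p_even by (metis even_add mod_self odd_one dvd_0_right)
qed

lemma nx_lt: "(i+1) mod p < p" using p_pos by simp

lemma dv_odd: "c < k \<Longrightarrow> odd i \<Longrightarrow> \<not> dv n k c i" using dv_even by blast

lemma S1: "c < k \<Longrightarrow> i < p \<Longrightarrow> rr n k c i \<noteq> rr n k c ((i+1) mod p)"
proof
  assume a: "c < k" "i < p" and e: "rr n k c i = rr n k c ((i+1) mod p)"
  let ?j = "(i+1) mod p"
  have pj: "even ?j \<longleftrightarrow> odd i" using nx_par a by simp
  show False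
  proof (cases "dv n k c i")
    case True
    then have "even i" using dv_even a by blast
    then have "\<not> dv n k c ?j" using pj dv_odd a by blast
    then show False using e rr_ndv_lt rr_dv True by (metis not_le)
  next
    case F: False
    show False
    proof (cases "dv n k c ?j")
      case True
      then have "even ?j" using dv_even a by blast
      then have "odd i" using pj by simp
      then show False using e rr_ndv_lt rr_dv True F by (metis not_le)
    next
      case False
      then have "bb h i = bb h ?j" using rr_nd_inj F a e nx_lt by blast
      then have "even i = even ?j" using bb_par hp a nx_lt p_def' by metis
      then show False using pj by simp
    qed
  qed
qed

lemma two_h: "2 < 2*h" using h3 by simp
lemma dvd_p: "2*h dvd p" by (simp add: p_def')

lemma S2: assumes c: "c < k" and ij: "i < j" "j < p" and e1: "rr n k c i = rr n k c j"
  and e2: "rr n k c ((i+1) mod p) = rr n k c ((j+1) mod p)" shows False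
proof -
  have ip: "i < p" using ij by simp
  have ndv_lt: "\<not> dv n k c x \<longleftrightarrow> rr n k c x < 2*h" for x using rr_ndv_lt rr_dv by (metis not_le)
  show False
  proof (cases "dv n k c i")
    case True
    then have dj: "dv n k c j" using e1 ndv_lt[of i] ndv_lt[of j] True by auto
    have j2: "j = i + 2" using dv_pair[OF c True dj ij(1) e1] .
    have ei: "even i" "i + 2 \<le> p" "j + 2 \<le> p" using dv_even[OF c True] dv_even[OF c dj] by auto
    then have n1: "(i+1) mod p = i+1" "(j+1) mod p = j+1" by simp_all
    have o: "odd (i+1)" "odd (j+1)" using ei j2 by auto
    have "rr n k c (i+1) = rr n k c (j+1)" using e2 n1 by simp
    moreover have "\<not> dv n k c (i+1)" "\<not> dv n k c (j+1)" using o dv_odd c by auto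
    moreover have "i+1 < p" "j+1 < p" using ei by auto
    ultimately have "bb h (i+1) = bb h (j+1)" using rr_nd_inj by blast
    then have "(i+1) mod (2*h) = (j+1) mod (2*h)" using bb_odd_inj o hp by blast
    then have "(i+1) mod (2*h) = (i+1+2) mod (2*h)" using j2 by (simp add: algebra_simps)
    then show False using mod_plus2[OF two_h] by metis
  next
    case ndi: False
    then have ndj: "\<not> dv n k c j" using e1 ndv_lt[of i] ndv_lt[of j] by auto
    have bij: "bb h i = bb h j" using rr_nd_inj[OF ndi ndj ip ij(2) e1] .
    show False
    proof (cases "dv n k c ((i+1) mod p)")
      case True
      then have dj1: "dv n k c ((j+1) mod p)" using e2 ndv_lt[of "(i+1) mod p"] ndv_lt[of "(j+1) mod p"] by auto
      have ne: "(i+1) mod p \<noteq> (j+1) mod p" using nx_inj ij by (metis less_irrefl order.strict_trans)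
      have "even ((i+1) mod p)" "even ((j+1) mod p)" using dv_even True dj1 c by auto
      then have o: "odd i" "odd j" using nx_par ij by auto
      have "i mod (2*h) = j mod (2*h)" using bb_odd_inj[OF o hp bij] .
      then have "(i+1) mod (2*h) = (j+1) mod (2*h)" by (metis mod_add_left_eq)
      then have m: "((i+1) mod p) mod (2*h) = ((j+1) mod p) mod (2*h)" using dvd_p by (simp add: mod_mod_cancel)
      have "(j+1) mod p = (i+1) mod p + 2 \<or> (i+1) mod p = (j+1) mod p + 2"
      proof (cases "(i+1) mod p < (j+1) mod p")
        case True
        then show ?thesis using dv_pair[OF c \<open>dv n k c ((i+1) mod p)\<close> dj1 True e2] by simp
      next
        case False
        then have "(j+1) mod p < (i+1) mod p" using ne by simp
        then show ?thesis using dv_pair[OF c dj1 \<open>dv n k c ((i+1) mod p)\<close> _ e2[symmetric]] by simp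
      qed
      then show False using m mod_plus2[OF two_h] by metis
    next
      case False
      then have "\<not> dv n k c ((j+1) mod p)" using e2 ndv_lt[of "(i+1) mod p"] ndv_lt[of "(j+1) mod p"] by auto
      then have "bb h ((i+1) mod p) = bb h ((j+1) mod p)" using rr_nd_inj False e2 nx_lt by blast
      then show False using bb_edge_inj[OF hp ij(1)] bij ij p_def' by simp
    qed
  qed
qed

lemma simple_RR: "c < k \<Longrightarrow> simple_route (RR n k c)"
  unfolding simple_route_def RR_def Let_def
  using S1 S2 nx_lt by (auto simp del: upt_Suc)

end


fun gw :: "nat \<Rightarrow> nat \<Rightarrow> nat \<Rightarrow> nat \<Rightarrow> nat" where
  "gw p k c0 0 = c0"
| "gw p k c0 (Suc i) = (if gw p k c0 i < k-1 \<and> Suc i mod p = p-2-2*gw p k c0 i then gw p k c0 i + 1 else gw p k c0 i)"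

context L begin

lemma pos_RR: "pos (RR n k) c t = rr n k c (t mod p)"
  unfolding pos_def RR_def using p_pos by simp

lemma gw_lt: "c0 < k \<Longrightarrow> gw p k c0 i < k"
  by (induction i) auto

lemma gw_mono1: "gw p k c0 i \<le> gw p k c0 (Suc i)" by simp

lemma gw_mono: "i \<le> j \<Longrightarrow> gw p k c0 i \<le> gw p k c0 j"
  by (induction j rule: dec_induct) (auto intro: le_trans[OF _ gw_mono1])

lemma rr_meet_up: "g < k-1 \<Longrightarrow> rr n k g (p-2-2*g) = 2*h \<and> rr n k (g+1) (p-2-2*g) = 2*h"
proof -
  assume g: "g < k-1"
  have a: "dv n k g (p-2-2*g)" using g by (simp add: dv_def)
  have e: "p-2-2*g = p - 2*(g+1)" by simp
  have b: "dv n k (g+1) (p-2-2*g)" using g e by (simp add: dv_def)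
  have pg: "p - 2 - 2*g \<ge> 10" "p - 2*(g+1) \<ge> 10" using pc[of g] g by auto
  have gk: "g < k" "g+1 < k" using g by auto
  show ?thesis using dv_val[OF gk(1) a] dv_val[OF gk(2) b] g pg e by auto
qed

lemma gw_step: "c0 < k \<Longrightarrow> pos (RR n k) (gw p k c0 (Suc i)) (Suc i) = pos (RR n k) (gw p k c0 i) (Suc i)"
  using rr_meet_up[of "gw p k c0 i"] by (auto simp: pos_RR)

lemma hit: "r < p \<Longrightarrow> \<exists>s. i < s \<and> s \<le> i + p \<and> s mod p = r"
proof -
  assume r: "r < p"
  let ?q = "i div p" and ?m = "i mod p"
  have i: "?q*p + ?m = i" by simp
  have m: "?m < p" using p_pos by simp
  show ?thesis
  proof (cases "?m < r")
    case True
    have "i < ?q*p + r" "?q*p + r \<le> i + p" using True r i by linarith+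
    moreover have "(?q*p + r) mod p = r" using r by simp
    ultimately show ?thesis by blast
  next
    case False
    have e: "?q*p + p + r = r + (Suc ?q)*p" by simp
    have "(?q*p + p + r) mod p = r" unfolding e using r by (simp only: mod_mult_self1 mod_less)
    moreover have "i < ?q*p + p + r" "?q*p + p + r \<le> i + p" using False r m i by linarith+
    ultimately show ?thesis by blast
  qed
qed

lemma gw_prog: assumes c0: "c0 < k" and g: "gw p k c0 i < k-1"
  shows "gw p k c0 (i + p) \<ge> gw p k c0 i + 1"
proof -
  let ?g = "gw p k c0 i"
  have "p-2-2*?g < p" using p_pos by simp
  then obtain s where s: "i < s" "s \<le> i + p" "s mod p = p-2-2*?g" using hit by blast
  obtain s' where s': "s = Suc s'" using s(1) by (cases s) auto
  have "gw p k c0 s' \<ge> ?g" using gw_mono s s' by simp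
  show ?thesis
  proof (cases "gw p k c0 s' = ?g")
    case True
    then have "gw p k c0 s = ?g + 1" using s s' g by simp
    then show ?thesis using gw_mono[OF s(2), of c0] by simp
  next
    case False
    then have "gw p k c0 s' \<ge> ?g + 1" using \<open>gw p k c0 s' \<ge> ?g\<close> by simp
    moreover have "gw p k c0 s' \<le> gw p k c0 (i+p)" using gw_mono s s' by simp
    ultimately show ?thesis by simp
  qed
qed

lemma gw_reach: "c0 < k \<Longrightarrow> gw p k c0 (j*p) \<ge> min (k-1) j"
proof (induction j)
  case 0 then show ?case by simp
next
  case (Suc j)
  show ?case
  proof (cases "gw p k c0 (j*p) < k-1")
    case True
    then have "gw p k c0 (j*p + p) \<ge> gw p k c0 (j*p) + 1" using gw_prog Suc by blast
    then show ?thesis using Suc by (simp add: add.commute)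
  next
    case False
    then have "gw p k c0 (j*p) \<le> gw p k c0 (Suc j * p)" using gw_mono by simp
    then show ?thesis using False by simp
  qed
qed

lemma gw_final: "c0 < k \<Longrightarrow> (k-1)*p \<le> t \<Longrightarrow> gw p k c0 t = k-1"
  using gw_reach[of c0 "k-1"] gw_mono[of "(k-1)*p" t c0] gw_lt[of c0 t] by simp

end


context L begin

lemma cover_pool: assumes y: "y < 2*h" shows "\<exists>r<p. rr n k (k-1) r = y"
proof -
  let ?m = "2*h" and ?c = "k-1"
  define v where "v = (y + ?m - ?c) mod ?m"
  have cm: "?c < ?m" using kh h3 by linarith
  have vm: "v < ?m" using hp by (simp add: v_def)
  have vy: "(v + ?c) mod ?m = y"
  proof -
    have "(v + ?c) mod ?m = (y + ?m - ?c + ?c) mod ?m" unfolding v_def by (simp add: mod_add_left_eq)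
    also have "y + ?m - ?c + ?c = y + ?m" using cm by simp
    finally show ?thesis using y by simp
  qed
  have key: "\<exists>r<p. \<not> dv n k ?c r \<and> bb h r = v"
  proof (cases "h \<le> v")
    case True
    let ?r = "2*(v-h)+1"
    have r1: "?r < 2*h" using vm True by linarith
    have r2: "2*h \<le> p" using h3 p_def' by simp
    have "?r mod (2*h) = ?r" using r1 by simp
    then have "bb h ?r = v" using True by (simp add: bb_def)
    moreover have "\<not> dv n k ?c ?r" using dv_odd k2 by simp
    ultimately show ?thesis using r1 r2 by (intro exI[of _ ?r]) auto
  next
    case False
    define r where "r = 2*h*v + 2*(if 2*h*v + 4 = p - 2*k + 2 then 1 else 2)"
    have "2*h*(v+1) \<le> 2*h*h" using False by (intro mult_le_mono2) simp
    then have hv: "2*h*v + 2*h \<le> p" using p_def' by (simp add: algebra_simps)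
    have rl: "r < 2*h*v + 2*h" "2*h*v \<le> r" using h3 unfolding r_def by (cases "2*h*v + 4 = p - 2*k + 2"; simp)+
    have rp: "r < p" using rl hv by linarith
    have "r div (2*h) = v"
      using rl by (intro div_nat_eqI) (simp_all add: algebra_simps)
    moreover have "even r" unfolding r_def by (metis dvd_add dvd_triv_left mult.assoc)
    ultimately have "bb h r = v" by (simp add: bb_def)
    moreover have "\<not> dv n k ?c r"
    proof
      assume "dv n k ?c r"
      then have "r = 0 \<or> r = 2 \<or> r = p - 2*?c" using k2 by (auto simp: dv_def)
      moreover have "p - 2*?c = p - 2*k + 2" using pk k2 by simp
      ultimately show False using pk h3 by (auto simp: r_def split: if_splits)
    qed
    ultimately show ?thesis using rp by blast
  qed
  then obtain r where r: "r < p" "\<not> dv n k ?c r" "bb h r = v" by blast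
  then have "rr n k ?c r = y" using rr_ndv vy by simp
  then show ?thesis using r by blast
qed

lemma cover: assumes y: "y < n" shows "\<exists>r<p. rr n k (k-1) r = y"
proof -
  have k1: "k - 1 < k" using k2 by simp
  consider "y < 2*h" | "y = 2*h" | "y = 2*h+1" | "y = n-1" using y nh by linarith
  then show ?thesis
  proof cases
    case 1 then show ?thesis using cover_pool by blast
  next
    case 2
    have d: "dv n k (k-1) (p - 2*(k-1))" unfolding dv_def by (rule disjI2, rule disjI2) (use k2 in simp)
    have "p - 2*(k-1) \<ge> 10" "p - 2*(k-1) < p" using pk k2 by auto
    then show ?thesis using dv_val[OF k1 d] 2 by (intro exI[of _ "p - 2*(k-1)"]) auto
  next
    case 3 then show ?thesis using pk by (intro exI[of _ 0]) (auto simp: rr_def)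
  next
    case 4 then show ?thesis using pk by (intro exI[of _ 2]) (auto simp: rr_def)
  qed
qed

lemma feasible_RR: "feasible n k (RR n k)"
  unfolding feasible_def start_sites_def
proof (intro ballI)
  fix x assume "x \<in> {pos (RR n k) c 0 |c. c < k}"
  then obtain c0 where c0: "c0 < k" and x: "x = pos (RR n k) c0 0" by blast
  let ?cs = "map (gw p k c0) [0..<k*p]"
  have w: "walk k (RR n k) x ?cs"
    unfolding walk_def
  proof (intro allI impI)
    fix i assume "i < length ?cs"
    then have i: "i < k*p" by simp
    show "?cs ! i < k \<and> pos (RR n k) (?cs ! i) i = (if i = 0 then x else pos (RR n k) (?cs ! (i - 1)) i)"
    proof (cases i)
      case 0 then show ?thesis using i c0 x by simp
    next
      case (Suc j) then show ?thesis using i gw_lt[OF c0, of i] gw_step[OF c0, of j] by (simp del: gw.simps)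
    qed
  qed
  have kp: "k*p = (k-1)*p + p" using k2 by (cases k) auto
  have "{0..<n} \<subseteq> walk_sites (RR n k) x ?cs"
  proof
    fix y assume "y \<in> {0..<n}"
    then obtain r where r: "r < p" "rr n k (k-1) r = y" using cover by auto
    define t where "t = (if r = 0 then k*p - 1 else (k-1)*p + r - 1)"
    have t1: "t < k*p" "(k-1)*p \<le> t" using r kp p_pos by (auto simp: t_def)
    have t2: "(t+1) mod p = r"
    proof (cases "r = 0")
      case True
      then have "t + 1 = k*p" using t_def kp p_pos by simp
      then show ?thesis using True by simp
    next
      case False
      then have "t + 1 = r + (k-1)*p" using t_def by simp
      then show ?thesis using r by simp
    qed
    have "?cs ! t = k-1" using t1 gw_final c0 by simp
    then have "pos (RR n k) (?cs ! t) (t+1) = y" using t2 r by (simp add: pos_RR)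
    moreover have "t < length ?cs" using t1 by simp
    ultimately have "y \<in> {pos (RR n k) (?cs ! i) (i + 1) | i. i < length ?cs}" by blast
    then show "y \<in> walk_sites (RR n k) x ?cs" unfolding walk_sites_def by (rule insertI2)
  qed
  then show "\<exists>cs. walk k (RR n k) x cs \<and> {0..<n} \<subseteq> walk_sites (RR n k) x cs" using w by blast
qed

end


definition wsel :: "nat \<Rightarrow> nat \<Rightarrow> routes \<Rightarrow> nat \<Rightarrow> nat list" where
  "wsel n k R x = (SOME cs. walk k R x cs \<and> {0..<n} \<subseteq> walk_sites R x cs)"

definition strat :: "nat \<Rightarrow> nat \<Rightarrow> routes \<Rightarrow> strategy" where
  "strat n k R h = (if length h - 1 < length (wsel n k R (hd h)) then Some (wsel n k R (hd h) ! (length h - 1)) else None)"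

lemma run_strat: "run (strat n k R) R x t = x # map (\<lambda>i. pos R (wsel n k R x ! i) (i+1)) [0..<min t (length (wsel n k R x))]"
proof (induction t)
  case 0 then show ?case by simp
next
  case (Suc t)
  let ?cs = "wsel n k R x"
  show ?case
  proof (cases "t < length ?cs")
    case True
    have r: "run (strat n k R) R x t = x # map (\<lambda>i. pos R (?cs ! i) (i+1)) [0..<t]" using Suc.IH True by (simp add: min_def)
    have "strat n k R (run (strat n k R) R x t) = Some (?cs ! t)" unfolding r strat_def using True by simp
    then show ?thesis using r True by (simp add: min_def)
  next
    case False
    have r: "run (strat n k R) R x t = x # map (\<lambda>i. pos R (?cs ! i) (i+1)) [0..<length ?cs]" using Suc.IH False by (simp add: min_def)
    have "strat n k R (run (strat n k R) R x t) = None" unfolding r strat_def using False by simp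
    then show ?thesis using r False by (simp add: min_def)
  qed
qed

lemma strat_exists: assumes f: "feasible n k R"
  shows "\<exists>s m. solves n k R s \<and> (\<forall>x\<in>start_sites k R. moves s R x \<le> m)"
proof -
  let ?s = "strat n k R"
  have W: "walk k R x (wsel n k R x) \<and> {0..<n} \<subseteq> walk_sites R x (wsel n k R x)" if "x \<in> start_sites k R" for x
  proof -
    have "\<exists>cs. walk k R x cs \<and> {0..<n} \<subseteq> walk_sites R x cs" using f that unfolding feasible_def by blast
    then show ?thesis unfolding wsel_def by (rule someI_ex)
  qed
  have sol: "solves n k R ?s"
    unfolding solves_def
  proof (intro ballI conjI allI)
    fix x t assume x: "x \<in> start_sites k R"
    let ?cs = "wsel n k R x"
    have w: "walk k R x ?cs" using W x by blast
    show "case ?s (run ?s R x t) of None \<Rightarrow> True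
            | Some c \<Rightarrow> c < k \<and> pos R c (length (run ?s R x t) - 1) = last (run ?s R x t)"
    proof (cases "t < length ?cs")
      case True
      then have s: "?s (run ?s R x t) = Some (?cs ! t)" by (simp add: strat_def run_strat)
      have "?cs ! t < k \<and> pos R (?cs ! t) t = (if t = 0 then x else pos R (?cs ! (t - 1)) t)"
        using w True unfolding walk_def by blast
      moreover have "last (run ?s R x t) = (if t = 0 then x else pos R (?cs ! (t - 1)) t)"
        using True by (cases t) (auto simp del: run.simps simp add: run_strat min_def)
      ultimately show ?thesis using s True by (simp add: run_strat min_def)
    next
      case False
      then show ?thesis by (simp add: strat_def run_strat min_def)
    qed
  next
    fix x assume x: "x \<in> start_sites k R"
    let ?cs = "wsel n k R x"
    let ?L = "length ?cs"
    have "?s (run ?s R x ?L) = None" by (simp add: strat_def run_strat)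
    moreover have "set (run ?s R x ?L) = walk_sites R x ?cs"
      by (auto simp: run_strat walk_sites_def)
    ultimately show "\<exists>T. ?s (run ?s R x T) = None \<and> {0..<n} \<subseteq> set (run ?s R x T)"
      using W x by metis
  qed
  have mv: "moves ?s R x \<le> length (wsel n k R x)" for x
    unfolding moves_def by (rule Least_le) (simp add: strat_def run_strat)
  have fin: "finite (start_sites k R)"
  proof -
    have "start_sites k R = (\<lambda>c. pos R c 0) ` {..<k}" by (auto simp: start_sites_def)
    then show ?thesis by simp
  qed
  let ?m = "Max ((\<lambda>x. length (wsel n k R x)) ` start_sites k R)"
  have "\<forall>x\<in>start_sites k R. moves ?s R x \<le> ?m"
    using mv fin by (meson Max_ge finite_imageI image_eqI le_trans)
  then show ?thesis using sol by blast
qed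

lemma run_stable: assumes "m \<le> t" and h: "s (run s R x m) = None" shows "run s R x t = run s R x m"
  using assms(1)
proof (induction t rule: dec_induct)
  case base then show ?case by simp
next
  case (step t) then show ?case using h by (simp add: Let_def)
qed

lemma run_len: "(\<forall>i<t. s (run s R x i) \<noteq> None) \<Longrightarrow> length (run s R x t) = t + 1"
  by (induction t) (auto simp: Let_def split: option.splits)

lemma run_prefix: "i \<le> j \<Longrightarrow> \<exists>zs. run s R x j = run s R x i @ zs"
proof (induction j rule: dec_induct)
  case base then show ?case by simp
next
  case (step j) then show ?case by (auto simp: Let_def split: option.splits)
qed

lemma run_hd: "run s R x t ! 0 = x"
  using run_prefix[of 0 t s R x] by (auto simp: nth_append)

lemma M_lower:
  assumes f: "feasible n k R"
    and low: "\<And>s. solves n k R s \<Longrightarrow> \<exists>x\<in>start_sites k R. B \<le> moves s R x"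
  shows "B \<le> M n k R"
proof -
  let ?P = "\<lambda>m. \<exists>s. solves n k R s \<and> (\<forall>x\<in>start_sites k R. moves s R x \<le> m)"
  have "\<exists>m. ?P m" using strat_exists[OF f] by blast
  then have "?P (M n k R)" unfolding M_def by (rule LeastI_ex)
  then obtain s where "solves n k R s" "\<forall>x\<in>start_sites k R. moves s R x \<le> M n k R" by blast
  then show ?thesis using low by (meson le_trans)
qed



lemma step_arith: assumes a: "c*(P-2) \<le> i" and b: "(i+1) mod P = P-2-2*c" and c: "2*c+2 \<le> (P::nat)"
  shows "(c+1)*(P-2) \<le> i+1"
proof -
  define q where "q = (i+1) div P"
  have e: "i + 1 = q*P + (P-2-2*c)" using b by (metis q_def div_mult_mod_eq)
  have "c*P \<le> i + 2*c" using a c by (simp add: diff_mult_distrib2 mult.commute) 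
  then have "c*P < (q+1)*P" using e c by (simp add: algebra_simps)
  then have "c < q+1" using mult_less_cancel2 by blast
  then have "c \<le> q" by simp
  then have "c*P \<le> q*P" by (simp add: mult_le_mono1)
  have p2: "P - 2 + 2 = P" using c by simp
  have h1: "(c+1)*(P-2) + (c+1)*2 = (c+1)*P" by (metis add_mult_distrib2 p2)
  have h2: "(c+1)*P = c*P + P" by simp
  have h3: "i + 1 + 2*c + 2 = q*P + P" using e c by simp
  have h0: "(c+1)*2 = 2*c+2" by simp
  show ?thesis using h0 h1 h2 h3 \<open>c*P \<le> q*P\<close> by linarith
qed

context L begin

lemma Z_carrier: "c < k \<Longrightarrow> rr n k c r = 2*h+1 \<Longrightarrow> c = k-1"
proof -
  assume c: "c < k" and e: "rr n k c r = 2*h+1"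
  have "dv n k c r" using e rr_ndv_lt by (metis less_not_refl2 not_less_eq Suc_eq_plus1 less_SucI)
  then show ?thesis using dv_val[OF c \<open>dv n k c r\<close>] e by auto
qed

lemma nth_run: "i \<le> j \<Longrightarrow> l < length (run s R x i) \<Longrightarrow> run s R x j ! l = run s R x i ! l"
  using run_prefix[of i j s R x] by (auto simp: nth_append)

lemma lower: assumes sol: "solves n k (RR n k) s"
  shows "(k-1)*(p-2) + 1 \<le> moves s (RR n k) (pos (RR n k) 0 0)"
proof -
  let ?R = "RR n k"
  let ?x = "pos ?R 0 0"
  have k0: "0 < k" using k2 by simp
  have xs: "?x \<in> start_sites k ?R" unfolding start_sites_def using k0 by blast
  have A: "\<And>t. case s (run s ?R ?x t) of None \<Rightarrow> True
            | Some c \<Rightarrow> c < k \<and> pos ?R c (length (run s ?R ?x t) - 1) = last (run s ?R ?x t)"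
    using sol xs unfolding solves_def by blast
  obtain T where T: "s (run s ?R ?x T) = None" "{0..<n} \<subseteq> set (run s ?R ?x T)"
    using sol xs unfolding solves_def by blast
  define m0 where "m0 = moves s ?R ?x"
  have hm: "s (run s ?R ?x m0) = None" unfolding m0_def moves_def using T(1) by (rule LeastI)
  have mT: "m0 \<le> T" unfolding m0_def moves_def using T(1) by (rule Least_le)
  have nn: "s (run s ?R ?x i) \<noteq> None" if "i < m0" for i
    using that not_less_Least unfolding m0_def moves_def by blast
  define H where "H = run s ?R ?x m0"
  have HT: "run s ?R ?x T = H" unfolding H_def using run_stable[where s=s and R="?R" and x="?x", OF mT hm] .
  have len: "length (run s ?R ?x i) = i + 1" if "i \<le> m0" for i
    using run_len nn that by (meson order.strict_trans2)
  define cc where "cc i = the (s (run s ?R ?x i))" for i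
  have sc: "s (run s ?R ?x i) = Some (cc i)" if "i < m0" for i using nn[OF that] cc_def by auto
  have F1: "cc i < k \<and> pos ?R (cc i) i = H ! i" if i: "i < m0" for i
  proof -
    have "cc i < k \<and> pos ?R (cc i) (length (run s ?R ?x i) - 1) = last (run s ?R ?x i)"
      using A[of i] sc[OF i] by simp
    moreover have "last (run s ?R ?x i) = run s ?R ?x i ! i"
    proof -
      have "run s ?R ?x i \<noteq> []" using len[of i] i by auto
      then show ?thesis using len[of i] i by (simp add: last_conv_nth)
    qed
    moreover have "run s ?R ?x i ! i = H ! i" unfolding H_def using nth_run[of i m0] len[of i] i by simp
    ultimately show ?thesis using len[of i] i by simp
  qed
  have F2: "H ! (i+1) = pos ?R (cc i) (i+1)" if i: "i < m0" for i
  proof -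
    have "run s ?R ?x (Suc i) = run s ?R ?x i @ [pos ?R (cc i) (i+1)]"
      using sc[OF i] len[of i] i by (simp add: Let_def)
    then have "run s ?R ?x (Suc i) ! (i+1) = pos ?R (cc i) (i+1)" using len[of i] i by (simp add: nth_append)
    moreover have "H ! (i+1) = run s ?R ?x (Suc i) ! (i+1)" unfolding H_def
      using nth_run[of "Suc i" m0] len[of "Suc i"] i by simp
    ultimately show ?thesis by simp
  qed
  have F0: "H ! 0 = ?x" unfolding H_def by (rule run_hd)
  have inv: "cc i * (p-2) \<le> i" if "i < m0" for i
    using that
  proof (induction i)
    case 0
    have "pos ?R (cc 0) 0 = pos ?R 0 0" using F1[OF 0] F0 by simp
    then have e: "rr n k (cc 0) 0 = rr n k 0 0" by (simp add: pos_RR)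
    have "cc 0 = 0"
    proof (rule ccontr)
      assume ne: "cc 0 \<noteq> 0"
      have "(0 = (cc 0)+1 \<and> 0 = p-2-2*cc 0) \<or> (cc 0 = 0+1 \<and> (0::nat) = p-2-2*0)"
        using meet[OF _ k0 ne e] F1[OF 0] by simp
      then show False using pc[of 0] k0 by auto
    qed
    then show ?case by simp
  next
    case (Suc i)
    then have i: "i < m0" by simp
    have IH: "cc i * (p-2) \<le> i" using Suc.IH i by simp
    have "pos ?R (cc (Suc i)) (Suc i) = pos ?R (cc i) (Suc i)" using F1[OF Suc.prems] F2[OF i] by simp
    then have e: "rr n k (cc (Suc i)) ((i+1) mod p) = rr n k (cc i) ((i+1) mod p)" by (simp add: pos_RR)
    have ck: "cc (Suc i) < k" "cc i < k" using F1 Suc.prems i by auto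
    show ?case
    proof (cases "cc (Suc i) = cc i")
      case True then show ?thesis using IH by simp
    next
      case False
      from meet[OF ck(2) ck(1) False[symmetric] e[symmetric]]
      show ?thesis
      proof
        assume a: "cc (Suc i) = cc i + 1 \<and> (i+1) mod p = p-2-2*cc i"
        have "2*cc i + 2 \<le> p" using pc[of "cc i"] ck by linarith
        then have "(cc i + 1)*(p-2) \<le> i+1" using step_arith[OF IH] a by blast
        then show ?thesis using a by simp
      next
        assume a: "cc i = cc (Suc i) + 1 \<and> (i+1) mod p = p-2-2*cc (Suc i)"
        then have "cc (Suc i) * (p-2) \<le> cc i * (p-2)" by (intro mult_le_mono1) simp
        then show ?thesis using IH by linarith
      qed
    qed
  qed
  have Zn: "2*h+1 < n" using nh n8 by linarith
  then have "2*h+1 \<in> set H" using T(2) HT by auto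
  then obtain j where j: "j < length H" "H ! j = 2*h+1" by (metis in_set_conv_nth)
  have lH: "length H = m0 + 1" unfolding H_def using len by simp
  show ?thesis
  proof (cases j)
    case 0
    have "\<not> dv n k 0 0" using k2 pc[of 0] unfolding dv_def by auto
    then have "rr n k 0 0 < 2*h" by (rule rr_ndv_lt)
    moreover have "rr n k 0 0 = 2*h+1" using j 0 F0 by (simp add: pos_RR)
    ultimately show ?thesis by simp
  next
    case (Suc i)
    then have i: "i < m0" using j lH by simp
    have "rr n k (cc i) ((i+1) mod p) = 2*h+1" using F2[OF i] j Suc by (simp add: pos_RR)
    then have "cc i = k-1" using Z_carrier F1[OF i] by blast
    then have "(k-1)*(p-2) \<le> i" using inv[OF i] by simp
    then show ?thesis using i m0_def by simp
  qed
qed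

end


lemma aux_lin: "b + 1 - c = d \<Longrightarrow> d > 0 \<Longrightarrow> b \<le> a \<Longrightarrow> c < a + (1::real)" by linarith

lemma num_bound:
  fixes K N Hh :: real
  assumes K: "K \<ge> 2" and N: "N \<ge> 8" and Hh: "2*Hh \<ge> N - 3" "Hh \<ge> 3"
  shows "(K - 1)*(2*Hh*Hh - 2) + 1 > 1/8 * K * N * (N - 8)"
proof -
  have "Hh*Hh \<ge> 3*3" using Hh by (intro mult_mono) auto
  then have a: "2*Hh*Hh - 2 \<ge> 0" by linarith
  have b: "K - 1 \<ge> K/2" using K by simp
  have "(K - 1)*(2*Hh*Hh - 2) \<ge> (K/2)*(2*Hh*Hh - 2)" using mult_right_mono[OF b a] .
  moreover have "(N-3)*(N-3) \<le> (2*Hh)*(2*Hh)" using Hh N by (intro mult_mono) auto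
  then have "(N-3)*(N-3)/2 - 2 \<le> 2*Hh*Hh - 2" by (simp add: algebra_simps)
  then have "(K/2)*((N-3)*(N-3)/2 - 2) \<le> (K/2)*(2*Hh*Hh - 2)" using K by (intro mult_left_mono) auto
  ultimately have c: "(K - 1)*(2*Hh*Hh - 2) \<ge> (K/2)*((N-3)*(N-3)/2 - 2)" by linarith
  have "(K/2)*((N-3)*(N-3)/2 - 2) + 1 - 1/8 * K * N * (N - 8) = (K*(N*N - 4*N + 10) + 8)/8"
    by (simp add: field_simps)
  moreover have "N*N - 4*N + 10 = (N-2)*(N-2) + 6" by (simp add: algebra_simps)
  then have "N*N - 4*N + 10 > 0" by (smt (verit) zero_le_square)
  then have "K*(N*N - 4*N + 10) > 0" using K by simp
  then have "K*(N*N - 4*N + 10) + 8 > 0" by linarith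
  ultimately show ?thesis using c aux_lin[of "(K/2)*((N-3)*(N-3)/2 - 2)" "1/8 * K * N * (N - 8)" "(K*(N*N - 4*N + 10) + 8)/8" "(K - 1)*(2*Hh*Hh - 2)"]
    by simp
qed

lemma small_case:
  assumes n: "4 \<le> n" "n < 8" and k: "2 \<le> k" "2*k \<le> n"
  shows "\<exists>R. pv_system n k R \<and> simple_pv k R \<and> homogeneous k R \<and> feasible n k R \<and>
           real (M n k R) > 1/8 * real k * real n * (real n - 8)"
proof -
  let ?R = "\<lambda>c::nat. [0..<n]"
  have pv: "pv_system n k ?R" using n k unfolding pv_system_def by auto
  have sr: "simple_route [0..<n]" unfolding simple_route_def Let_def
  proof (intro conjI allI impI)
    fix i assume "i < length [0..<n]"
    then have i: "i < n" by simp
    show "[0..<n] ! i \<noteq> [0..<n] ! ((i + 1) mod length [0..<n])"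
    proof (cases "i + 1 < n")
      case True then show ?thesis using i by simp
    next
      case False
      then have "i + 1 = n" using i by simp
      then show ?thesis using i n by simp
    qed
  next
    fix i j assume a: "i < j \<and> j < length [0..<n] \<and> [0..<n] ! i = [0..<n] ! j"
    then have "i < n" "j < n" by auto
    with a have "i = j" by simp
    with a show "[0..<n] ! ((i + 1) mod length [0..<n]) \<noteq> [0..<n] ! ((j + 1) mod length [0..<n])" by simp
  qed
  have sp: "simple_pv k ?R" unfolding simple_pv_def using sr by simp
  have hom: "homogeneous k ?R" unfolding homogeneous_def by simp
  have ps: "pos ?R c t = t mod n" for c t unfolding pos_def using n by simp
  have st: "start_sites k ?R = {0}" unfolding start_sites_def using k ps by (auto intro!: exI[of _ "0::nat"])
  have fe: "feasible n k ?R" unfolding feasible_def st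
  proof
    fix x assume "x \<in> {0::nat}"
    then have x: "x = 0" by simp
    let ?cs = "replicate (n-1) (0::nat)"
    have "walk k ?R x ?cs" unfolding walk_def using x k ps by auto
    moreover have "{0..<n} \<subseteq> walk_sites ?R x ?cs"
    proof
      fix y assume y: "y \<in> {0..<n}"
      show "y \<in> walk_sites ?R x ?cs"
      proof (cases y)
        case 0 then show ?thesis using x by (simp add: walk_sites_def)
      next
        case (Suc i)
        then have "i < length ?cs" "pos ?R (?cs ! i) (i+1) = y" using y ps by auto
        then show ?thesis unfolding walk_sites_def by blast
      qed
    qed
    ultimately show "\<exists>cs. walk k ?R x cs \<and> {0..<n} \<subseteq> walk_sites ?R x cs" by blast
  qed
  have "1/8 * real k * real n * (real n - 8) < 0"
    using n k by (simp add: mult_pos_neg)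
  then have "real (M n k ?R) > 1/8 * real k * real n * (real n - 8)" by (smt (verit) of_nat_0_le_iff)
  then show ?thesis using pv sp hom fe by blast
qed

theorem mainTheorem5:
  fixes n k :: nat
  assumes "4 \<le> n" and "2 \<le> k" and "2 * k \<le> n"
  shows "\<exists>R. pv_system n k R \<and> simple_pv k R \<and> homogeneous k R \<and> feasible n k R \<and>
           real (M n k R) > 1/8 * real k * real n * (real n - 8)"
proof (cases "n < 8")
  case True then show ?thesis using small_case assms by blast
next
  case False
  then interpret L n k using assms by unfold_locales auto
  let ?R = "RR n k"
  have pv: "pv_system n k ?R" unfolding pv_system_def RR_def using k2 kn p_pos rr_lt by auto
  have sp: "simple_pv k ?R" unfolding simple_pv_def using simple_RR by blast
  have hom: "homogeneous k ?R" unfolding homogeneous_def RR_def by simp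
  have fe: "feasible n k ?R" by (rule feasible_RR)
  have B: "(k-1)*(p-2) + 1 \<le> M n k ?R"
  proof (rule M_lower[OF fe])
    fix s assume "solves n k ?R s"
    moreover have "pos ?R 0 0 \<in> start_sites k ?R" unfolding start_sites_def using k2 by auto
    ultimately show "\<exists>x\<in>start_sites k ?R. (k-1)*(p-2) + 1 \<le> moves s ?R x" using lower by blast
  qed
  have hreal: "2 * real h \<ge> real n - 3" "real h \<ge> 3" using h3 n8 by (simp_all add: hh_def) linarith?
  have p2: "2 \<le> p" using pk by simp
  have "real (p-2) = real p - 2" using p2 by (simp add: of_nat_diff)
  moreover have "real p = 2*real h*real h" by (simp add: p_def')
  moreover have "real (k-1) = real k - 1" using k2 by (simp add: of_nat_diff)
  ultimately have "real ((k-1)*(p-2) + 1) = (real k - 1)*(2*real h*real h - 2) + 1"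
    by simp
  moreover have "(real k - 1)*(2*real h*real h - 2) + 1 > 1/8 * real k * real n * (real n - 8)"
    using num_bound[of "real k" "real n" "real h"] k2 n8 hreal by simp
  ultimately have "real (M n k ?R) > 1/8 * real k * real n * (real n - 8)"
    using B by (smt (verit) of_nat_le_iff)
  then show ?thesis using pv sp hom fe by blast
qed


end
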